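(* Fix a joint distribution $P_{UV}$ with marginals $P_U,P_V$, positive integers $M,L$, and let $(U_1,\dots,U_M,V_1,\dots,V_L)\sim P_U^{\otimes M}\times P_V^{\otimes L}$. Then for every $\tau>0$ and every event $\mathcal{F}\subseteq\mathcal{U}\times\mathcal{V}$, $$\mathbb{P}\Big[\bigcap_{m=1}^M\bigcap_{l=1}^L\{(U_m,V_l)\notin\mathcal{F}\}\Big]\le\mathbb{P}[(U,V)\notin\mathcal{F}]+\mathbb{P}[\imath_{U;V}(U;V)\ge\log(ML)-\tau]+\frac{\exp(\tau)}{\max\{M,L\}}+e^{-\frac12\exp(\tau)},$$ where $(U,V)\sim P_{UV}$.
   Context: $\imath_{U;V}(u;v):=\log\frac{dP_{UV}}{d(P_U\times P_V)}(u,v)$ (information density of $P_{UV}$). *)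

theory Defs
  imports "HOL-Probability.Probability"
begin

definition marg1 :: "('a \<times> 'b) measure \<Rightarrow> 'a measure \<Rightarrow> 'a measure" where
  "marg1 P MU = distr P MU fst"

definition marg2 :: "('a \<times> 'b) measure \<Rightarrow> 'b measure \<Rightarrow> 'b measure" where
  "marg2 P MV = distr P MV snd"

definition info_density ::
  "('a \<times> 'b) measure \<Rightarrow> 'a measure \<Rightarrow> 'b measure \<Rightarrow> 'a \<times> 'b \<Rightarrow> real" where
  "info_density P MU MV z =
     ln (enn2real (RN_deriv (marg1 P MU \<Otimes>\<^sub>M marg2 P MV) P z))"

end

theory Submission
  imports Defs
begin


lemma bonf_aux:
  fixes w :: "nat \<Rightarrow> real"
  assumes "\<And>i. i < n \<Longrightarrow> 0 \<le> w i \<and> w i \<le> 1"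
  shows "1 - (\<Sum>i<n. w i) \<le> (\<Prod>i<n. 1 - w i) \<and>
    (\<Sum>i<n. w i) - ((\<Sum>i<n. w i)^2 - (\<Sum>i<n. (w i)^2)) / 2 \<le> 1 - (\<Prod>i<n. 1 - w i)"
  using assms
proof (induction n)
  case 0 then show ?case by simp
next
  case (Suc n)
  define S where "S = (\<Sum>i<n. w i)"
  define Q where "Q = (\<Sum>i<n. (w i)^2)"
  define P where "P = (\<Prod>i<n. 1 - w i)"
  have IH: "1 - S \<le> P" "S - (S^2 - Q)/2 \<le> 1 - P" using Suc unfolding S_def Q_def P_def by auto
  have w: "0 \<le> w n" "w n \<le> 1" using Suc.prems by auto
  have P0: "0 \<le> P" unfolding P_def using Suc.prems by (intro prod_nonneg) auto
  have "1 - (S + w n) \<le> P * (1 - w n)"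
  proof -
    have "(1 - S) * (1 - w n) \<le> P * (1 - w n)" using IH(1) w by (intro mult_right_mono) auto
    moreover have "1 - (S + w n) \<le> (1 - S) * (1 - w n)"
    proof -
      have "0 \<le> S" unfolding S_def using Suc.prems by (intro sum_nonneg) auto
      then have "0 \<le> S * w n" using w by simp
      then show ?thesis by (simp add: algebra_simps)
    qed
    ultimately show ?thesis by linarith
  qed
  moreover have "(S + w n) - ((S + w n)^2 - (Q + (w n)^2)) / 2 \<le> 1 - P * (1 - w n)"
  proof -
    have e: "(S + w n) - ((S + w n)^2 - (Q + (w n)^2)) / 2 = (S - (S^2 - Q)/2) + w n * (1 - S)"
      by (simp add: power2_eq_square field_simps)
    have "w n * (1 - S) \<le> w n * P" using IH(1) w by (intro mult_left_mono) auto
    then show ?thesis unfolding e using IH(2) by (simp add: algebra_simps)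
  qed
  ultimately show ?case by (simp add: S_def Q_def P_def)
qed

lemma bonf:
  fixes w :: "nat \<Rightarrow> real"
  assumes "\<And>i. i < n \<Longrightarrow> 0 \<le> w i \<and> w i \<le> 1"
  shows "(\<Sum>i<n. w i) - ((\<Sum>i<n. w i)^2 - (\<Sum>i<n. (w i)^2)) / 2 \<le> 1"
proof -
  have "0 \<le> (\<Prod>i<n. 1 - w i)" using assms by (intro prod_nonneg) auto
  moreover have "(\<Sum>i<n. w i) - ((\<Sum>i<n. w i)^2 - (\<Sum>i<n. (w i)^2)) / 2 \<le> 1 - (\<Prod>i<n. 1 - w i)"
    using bonf_aux[of n w] assms by blast
  ultimately show ?thesis by linarith
qed




lemma Eset_lemma:
  fixes M L :: nat
  assumes Aset: "A \<in> sets (X \<Otimes>\<^sub>M Y)"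
  shows "{(u, v) \<in> space (PiM {..<M} (\<lambda>_. X) \<Otimes>\<^sub>M PiM {..<L} (\<lambda>_. Y)).
              \<forall>m<M. \<forall>l<L. (u m, v l) \<notin> A} \<in> sets (PiM {..<M} (\<lambda>_. X) \<Otimes>\<^sub>M PiM {..<L} (\<lambda>_. Y))"
proof -
  let ?S = "PiM {..<M} (\<lambda>_. X) \<Otimes>\<^sub>M PiM {..<L} (\<lambda>_. Y)"
  have mp: "(\<lambda>z. (fst z m, snd z l)) \<in> measurable ?S (X \<Otimes>\<^sub>M Y)" if "m < M" "l < L" for m l
    using that by (intro measurable_Pair measurable_compose[OF measurable_fst measurable_component_singleton]
       measurable_compose[OF measurable_snd measurable_component_singleton]) auto
  have eq: "{(u, v) \<in> space ?S. \<forall>m<M. \<forall>l<L. (u m, v l) \<notin> A} =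
     space ?S - (\<Union>m\<in>{..<M}. \<Union>l\<in>{..<L}. (\<lambda>z. (fst z m, snd z l)) -` A \<inter> space ?S)"
    by auto
  have "(\<Union>m\<in>{..<M}. \<Union>l\<in>{..<L}. (\<lambda>z. (fst z m, snd z l)) -` A \<inter> space ?S) \<in> sets ?S"
  proof (rule sets.finite_UN[OF finite_lessThan])
    fix m assume m: "m \<in> {..<M}"
    show "(\<Union>l\<in>{..<L}. (\<lambda>z. (fst z m, snd z l)) -` A \<inter> space ?S) \<in> sets ?S"
    proof (rule sets.finite_UN[OF finite_lessThan])
      fix l assume l: "l \<in> {..<L}"
      show "(\<lambda>z. (fst z m, snd z l)) -` A \<inter> space ?S \<in> sets ?S"
        using m l by (intro measurable_sets[OF mp Aset]) auto
    qed
  qed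
  then show ?thesis unfolding eq by (rule sets.Diff[OF sets.top])
qed

lemma slice_lemma:
  fixes M L :: nat
  assumes "v \<in> space (PiM {..<L} (\<lambda>_. Y))"
  shows "(\<lambda>u. (u, v)) -` {(u, v) \<in> space (PiM {..<M} (\<lambda>_. X) \<Otimes>\<^sub>M PiM {..<L} (\<lambda>_. Y)).
              \<forall>m<M. \<forall>l<L. (u m, v l) \<notin> A}
    = PiE {..<M} (\<lambda>_. space X - {x \<in> space X. \<exists>l<L. (x, v l) \<in> A})"
  using assms by (auto simp: space_pair_measure space_PiM PiE_iff extensional_def)

lemma prob_integral_01:
  assumes "prob_space X" "f \<in> borel_measurable X" "\<And>x. 0 \<le> f x \<and> f x \<le> (1::real)"
  shows "0 \<le> (\<integral>x. f x \<partial>X) \<and> (\<integral>x. f x \<partial>X) \<le> 1 \<and> integrable X f"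
proof -
  interpret prob_space X by fact
  have i: "integrable X f" using assms by (intro integrable_const_bound[where B=1]) auto
  have "(\<integral>x. f x \<partial>X) \<le> (\<integral>x. 1 \<partial>X)" using assms i by (intro integral_mono) auto
  moreover have "0 \<le> (\<integral>x. f x \<partial>X)" using assms by (intro integral_nonneg_AE AE_I2) auto
  ultimately show ?thesis using i by (simp add: prob_space)
qed

lemma sqdiff:
  fixes a :: "nat \<Rightarrow> real"
  shows "(\<Sum>i\<in>I. a i)^2 - (\<Sum>i\<in>I. (a i)^2) = (\<Sum>i\<in>I. \<Sum>j\<in>I. if i = j then 0 else a i * a j)"
proof -
  have "(\<Sum>i\<in>I. a i)^2 = (\<Sum>i\<in>I. \<Sum>j\<in>I. a i * a j)"
    by (simp add: power2_eq_square sum_product)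
  moreover have "(\<Sum>i\<in>I. (a i)^2) = (\<Sum>i\<in>I. \<Sum>j\<in>I. if i = j then a i * a j else 0)"
  proof (cases "finite I")
    case True then show ?thesis by (simp add: power2_eq_square sum.delta)
  next
    case False then show ?thesis by simp
  qed
  ultimately show ?thesis
    by (simp add: sum_subtractf[symmetric]) (intro sum.cong refl, auto)
qed

lemma expbound:
  fixes x a :: real
  assumes "0 \<le> x" "0 < a"
  shows "exp (-x) \<le> 1 - min 1 (x / a) + exp (-a)"
proof (cases "a \<le> x")
  case True
  then have "exp (-x) \<le> exp (-a)" by simp
  moreover have "min 1 (x / a) = 1" using True assms by simp
  ultimately show ?thesis by simp
next
  case False
  define t where "t = x / a"
  have t: "0 \<le> t" "t \<le> 1" using False assms by (auto simp: t_def)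
  have "-x = (1 - t) * 0 + t * (-a)" using assms by (simp add: t_def)
  then have "exp (-x) = exp ((1 - t) *\<^sub>R 0 + t *\<^sub>R (-a))" by simp
  also have "\<dots> \<le> (1 - t) * exp 0 + t * exp (-a)"
    using t by (intro convex_onD[OF exp_convex]) auto
  also have "\<dots> \<le> 1 - t + exp (-a)"
    using t by (simp add: mult_left_le_one_le)
  finally show ?thesis using t by (simp add: t_def)
qed

lemma pow_exp:
  fixes p :: real
  assumes "0 \<le> p" "p \<le> 1"
  shows "(1 - p)^M \<le> exp (- (real M * p))"
proof -
  have "(1 - p)^M \<le> (exp (-p))^M"
    using assms by (intro power_mono) (auto simp: exp_ge_add_one_self[of "-p", simplified])
  also have "\<dots> = exp (- (real M * p))" by (simp add: exp_of_nat_mult[symmetric])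
  finally show ?thesis .
qed

lemma prod_two:
  fixes a :: "nat \<Rightarrow> real"
  assumes "finite I" "i \<in> I" "j \<in> I" "i \<noteq> j"
  shows "(\<Prod>n\<in>I. if n = i \<or> n = j then a n else 1) = a i * a j"
proof -
  have "(\<Prod>n\<in>I. if n = i \<or> n = j then a n else 1) = (\<Prod>n\<in>{i, j}. if n = i \<or> n = j then a n else 1)"
    using assms by (intro prod.mono_neutral_cong_right) auto
  also have "\<dots> = a i * a j" using assms by simp
  finally show ?thesis .
qed




lemma core:
  fixes X :: "'a measure" and Y :: "'b measure" and w :: "'a \<times> 'b \<Rightarrow> real"
  assumes PX: "prob_space X" and PY: "prob_space Y"
    and Aset: "A \<in> sets (X \<Otimes>\<^sub>M Y)"
    and wm[measurable]: "w \<in> borel_measurable (X \<Otimes>\<^sub>M Y)"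
    and w01: "\<And>z. 0 \<le> w z \<and> w z \<le> 1"
    and wA: "\<And>z. z \<notin> A \<Longrightarrow> w z = 0"
    and aeX: "AE x in X. (\<integral>y. w (x, y) \<partial>Y) \<le> c"
    and aeY: "AE y in Y. (\<integral>x. w (x, y) \<partial>X) \<le> c"
    and cdef: "c = exp \<tau> / (real M * real L)"
    and M: "M > 0" and L: "L > 0"
    and int: "(\<integral>z. w z \<partial>(X \<Otimes>\<^sub>M Y)) = c * \<alpha>"
  shows "measure (PiM {..<M} (\<lambda>_. X) \<Otimes>\<^sub>M PiM {..<L} (\<lambda>_. Y))
           {(u, v) \<in> space (PiM {..<M} (\<lambda>_. X) \<Otimes>\<^sub>M PiM {..<L} (\<lambda>_. Y)).
              \<forall>m<M. \<forall>l<L. (u m, v l) \<notin> A}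
         \<le> 1 - \<alpha> + exp \<tau> / real M + exp (- (1/2) * exp \<tau>)"
proof -
  interpret X: prob_space X by fact
  interpret Y: prob_space Y by fact
  define PXX where "PXX = PiM {..<M} (\<lambda>_. X)"
  define PYY where "PYY = PiM {..<L} (\<lambda>_. Y)"
  interpret PXX: prob_space PXX unfolding PXX_def by (rule prob_space_PiM) (rule PX)
  interpret PYY: prob_space PYY unfolding PYY_def by (rule prob_space_PiM) (rule PY)
  interpret XY: pair_sigma_finite X Y ..
  interpret PP: pair_sigma_finite PXX PYY ..
  interpret XP: pair_sigma_finite X PYY ..
  interpret PPp: prob_space "PXX \<Otimes>\<^sub>M PYY" by (rule prob_space_pair) (unfold_locales)
  have cpos: "c > 0" using cdef M L by simp
  define E where "E = {(u, v) \<in> space (PXX \<Otimes>\<^sub>M PYY). \<forall>m<M. \<forall>l<L. (u m, v l) \<notin> A}"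
  define B where "B v = {x \<in> space X. \<exists>l<L. (x, v l) \<in> A}" for v
  define p where "p v = measure X (B v)" for v
  define g where "g y = (\<integral>x. w (x, y) \<partial>X) / c" for y
  define k where "k x = (\<integral>y. w (x, y) \<partial>Y)" for x
  define H where "H x v = ((\<Sum>l<L. w (x, v l))^2 - (\<Sum>l<L. (w (x, v l))^2)) / 2" for x v
  define d where "d v = (\<integral>x. H x v \<partial>X)" for v
  define s where "s v = (\<Sum>l<L. g (v l))" for v
  define a where "a = exp \<tau> / 2"
  define G where "G v = 1 - min 1 (s v / L) + 2 * M * exp (-\<tau>) * d v + exp (-a)" for v
  have Eset: "E \<in> sets (PXX \<Otimes>\<^sub>M PYY)" unfolding E_def PXX_def PYY_def by (rule Eset_lemma[OF Aset])
  have psx: "product_sigma_finite (\<lambda>_::nat. X)" unfolding product_sigma_finite_def by (simp add: X.sigma_finite_measure_axioms)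
  have Bset: "B v \<in> sets X" if v: "v \<in> space PYY" for v
  proof -
    have "B v = (\<Union>l\<in>{..<L}. (\<lambda>x. (x, v l)) -` A \<inter> space X)" unfolding B_def by auto
    also have "\<dots> \<in> sets X"
    proof (intro sets.finite_UN finite_lessThan)
      fix l assume "l \<in> {..<L}"
      then have "v l \<in> space Y" using v unfolding PYY_def by (auto simp: space_PiM)
      then show "(\<lambda>x. (x, v l)) -` A \<inter> space X \<in> sets X"
        by (intro measurable_sets[OF measurable_Pair2' Aset])
    qed
    finally show ?thesis .
  qed
  have p01: "0 \<le> p v \<and> p v \<le> 1" for v unfolding p_def by auto
  have step1: "emeasure (PXX \<Otimes>\<^sub>M PYY) E = (\<integral>\<^sup>+ v. ennreal ((1 - p v)^M) \<partial>PYY)"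
  proof -
    have "emeasure (PXX \<Otimes>\<^sub>M PYY) E = (\<integral>\<^sup>+ v. emeasure PXX ((\<lambda>u. (u, v)) -` E) \<partial>PYY)"
      by (rule PP.emeasure_pair_measure_alt2[OF Eset])
    also have "\<dots> = (\<integral>\<^sup>+ v. ennreal ((1 - p v)^M) \<partial>PYY)"
    proof (intro nn_integral_cong)
      fix v assume v: "v \<in> space PYY"
      have "(\<lambda>u. (u, v)) -` E = PiE {..<M} (\<lambda>_. space X - B v)"
        unfolding E_def PXX_def B_def PYY_def by (rule slice_lemma) (use v in \<open>simp add: PYY_def\<close>)
      then have "emeasure PXX ((\<lambda>u. (u, v)) -` E) = (\<Prod>m<M. emeasure X (space X - B v))"
        unfolding PXX_def using Bset[OF v] by (simp add: product_sigma_finite.emeasure_PiM[OF psx])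
      also have "\<dots> = ennreal (1 - p v) ^ M"
        using Bset[OF v] by (simp add: X.emeasure_eq_measure X.prob_compl p_def)
      also have "\<dots> = ennreal ((1 - p v)^M)" using p01[of v] by (simp add: ennreal_power)
      finally show "emeasure PXX ((\<lambda>u. (u, v)) -` E) = ennreal ((1 - p v)^M)" .
    qed
    finally show ?thesis .
  qed
  have w0: "0 \<le> w z" and w1: "w z \<le> 1" for z using w01[of z] by auto
  have wY: "(\<lambda>y. w (x, y)) \<in> borel_measurable Y" if "x \<in> space X" for x
    by (rule measurable_compose_Pair1[OF that wm])
  have wX: "(\<lambda>x. w (x, y)) \<in> borel_measurable X" if "y \<in> space Y" for y
    by (rule measurable_compose[OF measurable_Pair2'[OF that] wm])
  have intX: "0 \<le> (\<integral>x. w (x, y) \<partial>X) \<and> (\<integral>x. w (x, y) \<partial>X) \<le> 1 \<and> integrable X (\<lambda>x. w (x, y))"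
    if "y \<in> space Y" for y using prob_integral_01[OF PX wX[OF that]] w01 by auto
  have intY: "0 \<le> (\<integral>y. w (x, y) \<partial>Y) \<and> (\<integral>y. w (x, y) \<partial>Y) \<le> 1 \<and> integrable Y (\<lambda>y. w (x, y))"
    if "x \<in> space X" for x using prob_integral_01[OF PY wY[OF that]] w01 by auto
  have gm: "g \<in> borel_measurable Y"
  proof -
    have "(\<lambda>(y, x). w (x, y)) \<in> borel_measurable (Y \<Otimes>\<^sub>M X)"
      using measurable_compose[OF measurable_pair_swap' wm] by (simp add: case_prod_beta')
    then have "(\<lambda>y. \<integral>x. w (x, y) \<partial>X) \<in> borel_measurable Y"
      by (intro X.borel_measurable_lebesgue_integral) simp
    then show ?thesis unfolding g_def by simp
  qed
  have km: "k \<in> borel_measurable X"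
  proof -
    have "(\<lambda>(x, y). w (x, y)) \<in> borel_measurable (X \<Otimes>\<^sub>M Y)" by simp
    then have "(\<lambda>x. \<integral>y. w (x, y) \<partial>Y) \<in> borel_measurable X"
      by (intro Y.borel_measurable_lebesgue_integral) simp
    then show ?thesis unfolding k_def by simp
  qed
  have g0: "0 \<le> g y" if "y \<in> space Y" for y unfolding g_def using intX[OF that] cpos by simp
  have k01: "0 \<le> k x \<and> k x \<le> 1" if "x \<in> space X" for x unfolding k_def using intY[OF that] by simp
  have compY: "(\<lambda>v. v l) \<in> measurable PYY Y" if "l < L" for l
    unfolding PYY_def using that by (intro measurable_component_singleton) auto
  have spY: "v l \<in> space Y" if "v \<in> space PYY" "l < L" for v l
    using measurable_space[OF compY[OF that(2)] that(1)] .
  have sm: "s \<in> borel_measurable PYY"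
    unfolding s_def by (intro borel_measurable_sum measurable_compose[OF compY gm]) auto
  have s0: "0 \<le> s v" if "v \<in> space PYY" for v
    unfolding s_def using g0 spY[OF that] by (intro sum_nonneg) auto
  have wcomp: "(\<lambda>z. w (fst z, snd z l)) \<in> borel_measurable (X \<Otimes>\<^sub>M PYY)" if "l < L" for l
    by (rule measurable_compose[OF measurable_Pair[OF measurable_fst measurable_compose[OF measurable_snd compY[OF that]]] wm])
  have Hm: "(\<lambda>z. H (fst z) (snd z)) \<in> borel_measurable (X \<Otimes>\<^sub>M PYY)"
    unfolding H_def using wcomp
    by (intro borel_measurable_divide borel_measurable_diff borel_measurable_power borel_measurable_sum) auto
  have Hdbl: "H x v = (\<Sum>i<L. \<Sum>j<L. if i = j then 0 else w (x, v i) * w (x, v j)) / 2" for x v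
    unfolding H_def by (subst sqdiff) simp
  have Hb: "0 \<le> H x v \<and> H x v \<le> real L * real L / 2" for x v
  proof -
    have "(\<Sum>i<L. \<Sum>j<L. if i = j then 0 else w (x, v i) * w (x, v j)) \<le> (\<Sum>i<L. \<Sum>j<L. (1::real))"
      using w0 w1 by (intro sum_mono) (auto intro: mult_le_one)
    moreover have "0 \<le> (\<Sum>i<L. \<Sum>j<L. if i = j then 0 else w (x, v i) * w (x, v j))"
      using w0 by (intro sum_nonneg) auto
    ultimately show ?thesis unfolding Hdbl by simp
  qed
  have HX: "(\<lambda>x. H x v) \<in> borel_measurable X" if "v \<in> space PYY" for v
    using measurable_compose[OF measurable_Pair2'[OF that] Hm] by simp
  have dm: "d \<in> borel_measurable PYY"
  proof -
    have "(\<lambda>(v, x). H x v) \<in> borel_measurable (PYY \<Otimes>\<^sub>M X)"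
      using measurable_compose[OF measurable_pair_swap' Hm] by (simp add: case_prod_beta')
    then have "(\<lambda>v. \<integral>x. H x v \<partial>X) \<in> borel_measurable PYY"
      by (intro X.borel_measurable_lebesgue_integral) simp
    then show ?thesis unfolding d_def by simp
  qed
  have db: "0 \<le> d v \<and> d v \<le> real L * real L / 2" if "v \<in> space PYY" for v
  proof -
    have i: "integrable X (\<lambda>x. H x v)" using Hb HX[OF that]
      by (intro X.integrable_const_bound[where B="real L * real L / 2"]) auto
    have "d v \<le> (\<integral>x. real L * real L / 2 \<partial>X)" unfolding d_def using i Hb by (intro integral_mono) auto
    moreover have "0 \<le> d v" unfolding d_def using Hb by (intro integral_nonneg_AE AE_I2) auto
    ultimately show ?thesis by (simp add: X.prob_space)
  qed
  have minm: "(\<lambda>v. min 1 (s v / real L)) \<in> borel_measurable PYY" using sm by measurable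
  have minint: "integrable PYY (\<lambda>v. min 1 (s v / real L))"
    using minm s0 by (intro PYY.integrable_const_bound[where B=1] AE_I2) auto
  have dint: "integrable PYY d"
    using dm db by (intro PYY.integrable_const_bound[where B="real L * real L / 2"] AE_I2) auto
  have step2: "\<And>v. v \<in> space PYY \<Longrightarrow> (1 - p v)^M \<le> G v"
  proof -
    fix v assume v: "v \<in> space PYY"
    have wXl: "(\<lambda>x. w (x, v l)) \<in> borel_measurable X" if "l < L" for l using wX[OF spY[OF v that]] .
    have intl: "integrable X (\<lambda>x. w (x, v l))" if "l \<in> {..<L}" for l using intX[OF spY[OF v]] that by auto
    have Hint: "integrable X (\<lambda>x. H x v)" using Hb HX[OF v]
      by (intro X.integrable_const_bound[where B="real L * real L / 2"] AE_I2) auto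
    have ind: "(\<Sum>l<L. w (x, v l)) - H x v \<le> indicator (B v) x" if x: "x \<in> space X" for x
    proof (cases "x \<in> B v")
      case True
      then show ?thesis using bonf[of L "\<lambda>l. w (x, v l)"] w01 unfolding H_def by simp
    next
      case False
      then have "w (x, v l) = 0" if "l < L" for l using x that wA unfolding B_def by auto
      then show ?thesis using False unfolding H_def by simp
    qed
    have pa: "c * s v - d v \<le> p v"
    proof -
      have "(\<integral>x. (\<Sum>l<L. w (x, v l)) - H x v \<partial>X) \<le> (\<integral>x. indicator (B v) x \<partial>X)"
      proof (rule integral_mono)
        have "integrable X (\<lambda>x. \<Sum>l<L. w (x, v l))" by (rule Bochner_Integration.integrable_sum) (use intl in auto)
        then show "integrable X (\<lambda>x. (\<Sum>l<L. w (x, v l)) - H x v)" using Hint by simp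
        show "integrable X (indicator (B v) :: 'a \<Rightarrow> real)"
          using Bset[OF v] by (simp add: X.emeasure_eq_measure)
      qed (use ind in auto)
      also have "\<dots> = p v" unfolding p_def using Bset[OF v] by simp
      also have "(\<integral>x. (\<Sum>l<L. w (x, v l)) - H x v \<partial>X) = (\<Sum>l<L. (\<integral>x. w (x, v l) \<partial>X)) - d v"
        unfolding d_def using intl Hint
        by (subst Bochner_Integration.integral_diff) (auto intro!: integrable_sum simp: Bochner_Integration.integral_sum)
      also have "(\<Sum>l<L. (\<integral>x. w (x, v l) \<partial>X)) = c * s v"
        unfolding s_def g_def using cpos by (simp add: sum_distrib_left)
      finally show ?thesis .
    qed
    define t where "t = 2 * real M * exp (-\<tau>)"
    have t0: "t > 0" unfolding t_def using M by simp
    have tc: "t * c = 2 / real L"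
    proof -
      have e: "exp (-\<tau>) * exp \<tau> = 1" by (simp add: exp_minus)
      show ?thesis unfolding t_def cdef using M L e by (simp add: field_simps)
    qed
    have a0: "a > 0" unfolding a_def by simp
    have "(1 - p v)^M \<le> exp (- (real M * p v))" using p01[of v] by (intro pow_exp) auto
    also have "\<dots> \<le> 1 - min 1 (real M * p v / a) + exp (-a)"
      using p01[of v] a0 by (intro expbound) auto
    also have "real M * p v / a = t * p v" unfolding t_def a_def by (simp add: exp_minus field_simps)
    also have "min 1 (t * p v) \<ge> min 1 (s v / L) - t * d v"
    proof -
      have "t * (c * s v - d v) \<le> t * p v" using pa t0 by (intro mult_left_mono) auto
      moreover have "t * (c * s v - d v) = 2 * s v / L - t * d v"
      proof -
        have "t * (c * s v - d v) = (t * c) * s v - t * d v" by (simp add: algebra_simps)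
        then show ?thesis unfolding tc by simp
      qed
      moreover have "s v / L \<le> 2 * s v / L" using s0[OF v] L by (simp add: divide_right_mono)
      moreover have "0 \<le> t * d v" using t0 db[OF v] by simp
      ultimately show ?thesis by linarith
    qed
    then have "1 - min 1 (t * p v) + exp (-a) \<le> G v" unfolding G_def t_def by linarith
    finally show "(1 - p v)^M \<le> G v" .
  qed
  have Gint: "integrable PYY G"
    unfolding G_def using minint dint by simp
  have step3: "measure (PXX \<Otimes>\<^sub>M PYY) E \<le> (\<integral>v. G v \<partial>PYY)"
  proof -
    have G0: "AE v in PYY. 0 \<le> G v"
    proof (intro AE_I2)
      fix v assume "v \<in> space PYY"
      moreover have "0 \<le> (1 - p v)^M" using p01[of v] by simp
      ultimately show "0 \<le> G v" using step2 by (meson order_trans)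
    qed
    have "ennreal (measure (PXX \<Otimes>\<^sub>M PYY) E) = (\<integral>\<^sup>+ v. ennreal ((1 - p v)^M) \<partial>PYY)"
      using step1 by (simp add: PPp.emeasure_eq_measure)
    also have "\<dots> \<le> (\<integral>\<^sup>+ v. ennreal (G v) \<partial>PYY)"
      using step2 by (intro nn_integral_mono) (simp add: ennreal_leI)
    also have "\<dots> = ennreal (\<integral>v. G v \<partial>PYY)"
      by (rule nn_integral_eq_integral[OF Gint G0])
    finally show ?thesis using G0 by (simp add: ennreal_le_iff integral_nonneg_AE)
  qed
  have step4: "(\<integral>v. G v \<partial>PYY) = 1 - (\<integral>v. min 1 (s v / L) \<partial>PYY) + 2 * M * exp (-\<tau>) * (\<integral>v. d v \<partial>PYY) + exp (-a)"
    unfolding G_def using minint dint by (simp add: PYY.prob_space)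
  have step5: "(\<integral>v. min 1 (s v / L) \<partial>PYY) \<ge> \<alpha>"
  proof -
    interpret XYp: prob_space "X \<Otimes>\<^sub>M Y" by (rule prob_space_pair) (unfold_locales)
    have comp_int: "(\<integral>v. f (v l) \<partial>PYY) = (\<integral>y. f y \<partial>Y)" if "l < L" "f \<in> borel_measurable Y" for f :: "'b \<Rightarrow> real" and l
    proof -
      have "distr PYY Y (\<lambda>v. v l) = Y" unfolding PYY_def using that PY by (intro distr_PiM_component) auto
      then have "(\<integral>y. f y \<partial>Y) = (\<integral>y. f y \<partial>distr PYY Y (\<lambda>v. v l))" by simp
      also have "\<dots> = (\<integral>v. f (v l) \<partial>PYY)" by (rule integral_distr[OF compY[OF that(1)] that(2)])
      finally show ?thesis by simp
    qed
    have gle1: "AE y in Y. g y \<le> 1" using aeY by eventually_elim (use cpos in \<open>simp add: g_def\<close>)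
    have gint: "integrable Y g" using gm g0 intX cpos
      by (intro Y.integrable_const_bound[where B="1/c"] AE_I2) (auto simp: g_def divide_right_mono)
    have wint: "integrable (X \<Otimes>\<^sub>M Y) w" using w01 by (intro XYp.integrable_const_bound[where B=1] AE_I2) auto
    have gval: "(\<integral>y. g y \<partial>Y) = \<alpha>"
    proof -
      have "(\<integral>y. g y \<partial>Y) = (\<integral>y. (\<integral>x. w (x, y) \<partial>X) \<partial>Y) / c" unfolding g_def by simp
      also have "(\<integral>y. (\<integral>x. w (x, y) \<partial>X) \<partial>Y) = (\<integral>z. w z \<partial>(X \<Otimes>\<^sub>M Y))"
        using XY.integral_snd[of "\<lambda>x y. w (x, y)"] wint by simp
      finally show ?thesis using int cpos by simp
    qed
    have mgm: "(\<lambda>y. min 1 (g y)) \<in> borel_measurable Y" using gm by measurable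
    have "(\<integral>v. (\<Sum>l<L. min 1 (g (v l))) / real L \<partial>PYY) \<le> (\<integral>v. min 1 (s v / L) \<partial>PYY)"
    proof (intro integral_mono minint)
      show "integrable PYY (\<lambda>v. (\<Sum>l<L. min 1 (g (v l))) / real L)"
    proof -
        have qm: "(\<lambda>v. (\<Sum>l<L. min 1 (g (v l))) / real L) \<in> borel_measurable PYY"
          by (intro borel_measurable_divide borel_measurable_sum borel_measurable_const measurable_compose[OF compY mgm]) auto
        have "norm ((\<Sum>l<L. min 1 (g (v l))) / real L) \<le> 1" if v: "v \<in> space PYY" for v
        proof -
          have "(\<Sum>l<L. min 1 (g (v l))) \<le> (\<Sum>l<L. (1::real))" by (intro sum_mono) auto
          moreover have "0 \<le> (\<Sum>l<L. min 1 (g (v l)))" using g0 spY[OF v] by (intro sum_nonneg) auto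
          ultimately show ?thesis using L by simp
        qed
        then show ?thesis using qm by (intro PYY.integrable_const_bound[where B=1] AE_I2) auto
      qed
      fix v assume v: "v \<in> space PYY"
      have "(\<Sum>l<L. min 1 (g (v l))) \<le> (\<Sum>l<L. (1::real))" by (intro sum_mono) auto
      then have q1: "(\<Sum>l<L. min 1 (g (v l))) / real L \<le> 1" using L by simp
      have "(\<Sum>l<L. min 1 (g (v l))) \<le> s v" unfolding s_def by (intro sum_mono) auto
      then have q2: "(\<Sum>l<L. min 1 (g (v l))) / real L \<le> s v / real L" by (intro divide_right_mono) auto
      show "(\<Sum>l<L. min 1 (g (v l))) / real L \<le> min 1 (s v / real L)" using q1 q2 by simp
    qed
    also have "(\<integral>v. (\<Sum>l<L. min 1 (g (v l))) / real L \<partial>PYY) = (\<Sum>l<L. (\<integral>v. min 1 (g (v l)) \<partial>PYY)) / real L"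
    proof -
      have ii: "integrable PYY (\<lambda>v. min 1 (g (v l)))" if "l \<in> {..<L}" for l
        using that g0 spY by (intro PYY.integrable_const_bound[where B=1] AE_I2 measurable_compose[OF compY mgm]) auto
      have "(\<integral>v. (\<Sum>l<L. min 1 (g (v l))) / real L \<partial>PYY) = (\<integral>v. (\<Sum>l<L. min 1 (g (v l))) \<partial>PYY) / real L"
        by (rule integral_divide_zero)
      also have "(\<integral>v. (\<Sum>l<L. min 1 (g (v l))) \<partial>PYY) = (\<Sum>l<L. (\<integral>v. min 1 (g (v l)) \<partial>PYY))"
        by (rule Bochner_Integration.integral_sum[OF ii])
      finally show ?thesis .
    qed
    also have "\<dots> = (\<Sum>l<L. (\<integral>y. min 1 (g y) \<partial>Y)) / real L"
    proof -
      have "(\<Sum>l<L. (\<integral>v. min 1 (g (v l)) \<partial>PYY)) = (\<Sum>l<L. (\<integral>y. min 1 (g y) \<partial>Y))"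
        by (intro sum.cong refl comp_int mgm) auto
      then show ?thesis by simp
    qed
    also have "\<dots> = (\<integral>y. min 1 (g y) \<partial>Y)" using L by simp
    also have "\<dots> = (\<integral>y. g y \<partial>Y)" using gle1 by (intro integral_cong_AE mgm gm) (auto elim: AE_mp)
    finally show ?thesis using gval by simp
  qed
  have step6: "(\<integral>v. d v \<partial>PYY) \<le> L^2 * c^2 / 2"
  proof -
    interpret XPp: prob_space "X \<Otimes>\<^sub>M PYY" by (rule prob_space_pair) (unfold_locales)
    have psy: "product_sigma_finite (\<lambda>_::nat. Y)" unfolding product_sigma_finite_def by (simp add: Y.sigma_finite_measure_axioms)
    have Hint: "integrable (X \<Otimes>\<^sub>M PYY) (case_prod H)"
    proof -
      have "case_prod H = (\<lambda>z. H (fst z) (snd z))" by (simp add: case_prod_beta')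
      then show ?thesis using Hm Hb by (auto intro!: XPp.integrable_const_bound[where B="real L * real L / 2"] AE_I2)
    qed
    have "(\<integral>v. d v \<partial>PYY) = (\<integral>v. (\<integral>x. H x v \<partial>X) \<partial>PYY)" unfolding d_def ..
    also have "\<dots> = (\<integral>x. (\<integral>v. H x v \<partial>PYY) \<partial>X)" by (rule XP.Fubini_integral[OF Hint])
    also have "\<dots> \<le> (\<integral>x. real L * real L / 2 * (k x)^2 \<partial>X)"
    proof (rule integral_mono)
      show "integrable X (\<lambda>x. \<integral>v. H x v \<partial>PYY)" by (rule XP.integrable_fst[OF Hint])
      show "integrable X (\<lambda>x. real L * real L / 2 * (k x)^2)"
        using km k01 by (intro integrable_mult_right X.integrable_const_bound[where B=1] AE_I2) (auto simp: abs_square_le_1)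
      fix x assume x: "x \<in> space X"
      have trm: "(\<integral>v. (if i = j then 0 else w (x, v i) * w (x, v j)) \<partial>PYY) \<le> (k x)^2 \<and>
          integrable PYY (\<lambda>v. if i = j then 0 else w (x, v i) * w (x, v j))" if ij: "i < L" "j < L" for i j
      proof (cases "i = j")
        case True then show ?thesis by simp
      next
        case False
        define f where "f n = (\<lambda>y. if n = i \<or> n = j then w (x, y) else 1)" for n
        have fi: "integrable Y (f n)" for n
        proof (cases "n = i \<or> n = j")
          case True
          then have "f n = (\<lambda>y. w (x, y))" unfolding f_def by auto
          then show ?thesis using intY[OF x] by simp
        next
          case False
          then have "f n = (\<lambda>y. 1)" unfolding f_def by auto
          then show ?thesis by simp
        qed
        have "(\<integral>v. (\<Prod>n\<in>{..<L}. f n (v n)) \<partial>PYY) = (\<Prod>n\<in>{..<L}. integral\<^sup>L Y (f n))"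
          unfolding PYY_def by (rule product_sigma_finite.product_integral_prod[OF psy]) (auto intro: fi)
        moreover have "(\<Prod>n\<in>{..<L}. f n (v n)) = w (x, v i) * w (x, v j)" for v
          unfolding f_def using prod_two[of "{..<L}" i j "\<lambda>n. w (x, v n)"] ij False by simp
        moreover have "(\<Prod>n\<in>{..<L}. integral\<^sup>L Y (f n)) = k x * k x"
        proof -
          have "integral\<^sup>L Y (f n) = (if n = i \<or> n = j then k x else 1)" for n
            unfolding f_def k_def by (simp add: Y.prob_space)
          then show ?thesis using prod_two[of "{..<L}" i j "\<lambda>n. k x"] ij False by simp
        qed
        moreover have "integrable PYY (\<lambda>v. \<Prod>n\<in>{..<L}. f n (v n))"
          unfolding PYY_def by (rule product_sigma_finite.product_integrable_prod[OF psy]) (auto intro: fi)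
        ultimately show ?thesis using False by (simp add: power2_eq_square)
      qed
      have "(\<integral>v. H x v \<partial>PYY) = (\<Sum>i<L. \<Sum>j<L. (\<integral>v. (if i = j then 0 else w (x, v i) * w (x, v j)) \<partial>PYY)) / 2"
      proof -
        have ii: "integrable PYY (\<lambda>v. if i = j then 0 else w (x, v i) * w (x, v j))" if "i \<in> {..<L}" "j \<in> {..<L}" for i j
          using trm that by auto
        have "(\<integral>v. (\<Sum>i<L. \<Sum>j<L. if i = j then 0 else w (x, v i) * w (x, v j)) \<partial>PYY)
          = (\<Sum>i<L. (\<integral>v. (\<Sum>j<L. if i = j then 0 else w (x, v i) * w (x, v j)) \<partial>PYY))"
          by (rule Bochner_Integration.integral_sum) (auto intro!: integrable_sum ii)
        also have "\<dots> = (\<Sum>i<L. \<Sum>j<L. (\<integral>v. (if i = j then 0 else w (x, v i) * w (x, v j)) \<partial>PYY))"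
          by (intro sum.cong refl Bochner_Integration.integral_sum ii) auto
        finally show ?thesis unfolding Hdbl by simp
      qed
      also have "\<dots> \<le> (\<Sum>i<L. \<Sum>j<L. (k x)^2) / 2"
        using trm by (intro divide_right_mono sum_mono) auto
      also have "\<dots> = real L * real L / 2 * (k x)^2" by simp
      finally show "(\<integral>v. H x v \<partial>PYY) \<le> real L * real L / 2 * (k x)^2" .
    qed
    also have "\<dots> \<le> (\<integral>x. real L * real L / 2 * c^2 \<partial>X)"
    proof (rule integral_mono_AE)
      show "integrable X (\<lambda>x. real L * real L / 2 * (k x)^2)"
        using km k01 by (intro integrable_mult_right X.integrable_const_bound[where B=1] AE_I2) (auto simp: abs_square_le_1)
      show "integrable X (\<lambda>x. real L * real L / 2 * c^2)" by simp
      show "AE x in X. real L * real L / 2 * (k x)^2 \<le> real L * real L / 2 * c^2"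
        using aeX
      proof (eventually_elim)
        case (elim x)
        then have "k x \<le> c" by (simp add: k_def)
        moreover have "0 \<le> k x" unfolding k_def using w0 by (intro integral_nonneg_AE AE_I2) auto
        ultimately have "(k x)^2 \<le> c^2" by (intro power_mono) auto
        then show ?case by (intro mult_left_mono) auto
      qed
    qed
    also have "\<dots> = L^2 * c^2 / 2" by (simp add: X.prob_space power2_eq_square)
    finally show ?thesis .
  qed
  have fin: "2 * M * exp (-\<tau>) * (L^2 * c^2 / 2) = exp \<tau> / M"
  proof -
    have e: "exp (-\<tau>) * exp \<tau> = 1" by (simp add: exp_minus)
    show ?thesis unfolding cdef using M L e by (simp add: field_simps power2_eq_square)
  qed
  have "measure (PXX \<Otimes>\<^sub>M PYY) E \<le> 1 - \<alpha> + exp \<tau> / real M + exp (-a)"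
  proof -
    have "2 * M * exp (-\<tau>) * (\<integral>v. d v \<partial>PYY) \<le> 2 * M * exp (-\<tau>) * (L^2 * c^2 / 2)"
      using step6 by (intro mult_left_mono) auto
    then show ?thesis using step3 step4 step5 fin by linarith
  qed
  then show ?thesis unfolding E_def PXX_def PYY_def a_def by simp
qed




lemma ae_le1:
  fixes X :: "'a measure" and h :: "'a \<Rightarrow> ennreal"
  assumes "prob_space X" and hm: "h \<in> borel_measurable X"
    and eq: "\<And>S. S \<in> sets X \<Longrightarrow> (\<integral>\<^sup>+ x. h x * indicator S x \<partial>X) = emeasure X S"
  shows "AE x in X. h x = 1"
proof -
  interpret X: prob_space X by fact
  have "density X h = X"
    by (rule measure_eqI) (simp_all add: emeasure_density hm eq)
  also have "X = density X (\<lambda>_. 1)" by (simp add: density_1)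
  finally show ?thesis using X.density_unique_iff[OF hm] by simp
qed

lemma swap_measure:
  fixes X :: "'a measure" and Y :: "'b measure" and A :: "('a \<times> 'b) set" and M L :: nat
  assumes "prob_space X" "prob_space Y"
    and Aset: "A \<in> sets (X \<Otimes>\<^sub>M Y)"
  shows "measure (PiM {..<M} (\<lambda>_. X) \<Otimes>\<^sub>M PiM {..<L} (\<lambda>_. Y))
           {(u, v) \<in> space (PiM {..<M} (\<lambda>_. X) \<Otimes>\<^sub>M PiM {..<L} (\<lambda>_. Y)).
              \<forall>m<M. \<forall>l<L. (u m, v l) \<notin> A}
       = measure (PiM {..<L} (\<lambda>_. Y) \<Otimes>\<^sub>M PiM {..<M} (\<lambda>_. X))
           {(v, u) \<in> space (PiM {..<L} (\<lambda>_. Y) \<Otimes>\<^sub>M PiM {..<M} (\<lambda>_. X)).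
              \<forall>l<L. \<forall>m<M. (v l, u m) \<notin> ((\<lambda>(y, x). (x, y)) -` A \<inter> space (Y \<Otimes>\<^sub>M X))}"
proof -
  let ?PX = "PiM {..<M} (\<lambda>_. X)" and ?PY = "PiM {..<L} (\<lambda>_. Y)"
  interpret PX: prob_space ?PX by (rule prob_space_PiM) (rule assms(1))
  interpret PY: prob_space ?PY by (rule prob_space_PiM) (rule assms(2))
  interpret PP: pair_sigma_finite ?PX ?PY ..
  let ?E = "{(u, v) \<in> space (?PX \<Otimes>\<^sub>M ?PY). \<forall>m<M. \<forall>l<L. (u m, v l) \<notin> A}"
  have Eset: "?E \<in> sets (?PX \<Otimes>\<^sub>M ?PY)" by (rule Eset_lemma[OF Aset])
  have "measure (?PX \<Otimes>\<^sub>M ?PY) ?E = measure (distr (?PY \<Otimes>\<^sub>M ?PX) (?PX \<Otimes>\<^sub>M ?PY) (\<lambda>(x, y). (y, x))) ?E"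
    by (simp add: PP.distr_pair_swap[symmetric])
  also have "\<dots> = measure (?PY \<Otimes>\<^sub>M ?PX) ((\<lambda>(x, y). (y, x)) -` ?E \<inter> space (?PY \<Otimes>\<^sub>M ?PX))"
    by (rule measure_distr[OF measurable_pair_swap' Eset])
  also have "(\<lambda>(x, y). (y, x)) -` ?E \<inter> space (?PY \<Otimes>\<^sub>M ?PX) =
     {(v, u) \<in> space (?PY \<Otimes>\<^sub>M ?PX). \<forall>l<L. \<forall>m<M. (v l, u m) \<notin> ((\<lambda>(y, x). (x, y)) -` A \<inter> space (Y \<Otimes>\<^sub>M X))}"
    by (auto simp: space_pair_measure space_PiM PiE_iff extensional_def)
  finally show ?thesis .
qed




lemma int_le_c:
  fixes Y :: "'b measure" and g :: "'b \<Rightarrow> ennreal" and wy :: "'b \<Rightarrow> real"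
  assumes "prob_space Y" and gm: "g \<in> borel_measurable Y" and g1: "(\<integral>\<^sup>+ y. g y \<partial>Y) = 1"
    and wm: "wy \<in> borel_measurable Y" and w01: "\<And>y. 0 \<le> wy y \<and> wy y \<le> 1"
    and wle: "\<And>y. ennreal (wy y) \<le> ennreal c * g y" and c: "0 \<le> c"
  shows "(\<integral>y. wy y \<partial>Y) \<le> c"
proof -
  interpret Y: prob_space Y by fact
  have i: "integrable Y wy" using w01 wm by (intro Y.integrable_const_bound[where B=1] AE_I2) auto
  have "ennreal (\<integral>y. wy y \<partial>Y) = (\<integral>\<^sup>+ y. ennreal (wy y) \<partial>Y)"
    using i w01 by (intro nn_integral_eq_integral[symmetric]) auto
  also have "\<dots> \<le> (\<integral>\<^sup>+ y. ennreal c * g y \<partial>Y)" using wle by (intro nn_integral_mono) auto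
  also have "\<dots> = ennreal c" using gm g1 by (simp add: nn_integral_cmult)
  finally show ?thesis using c by (simp add: ennreal_le_iff)
qed

lemma wle_lemma:
  fixes c :: real and y :: ennreal
  assumes "0 < c"
  shows "ennreal (c * enn2real y * indicator A z) \<le> ennreal c * y"
proof (cases "y = \<top>")
  case True then show ?thesis using assms by (simp add: ennreal_mult_top)
next
  case False
  have "ennreal (c * enn2real y * indicator A z) \<le> ennreal (c * enn2real y)"
    using assms by (intro ennreal_leI) (auto simp: indicator_def)
  also have "\<dots> = ennreal c * ennreal (enn2real y)" using assms by (simp add: ennreal_mult)
  also have "\<dots> = ennreal c * y" using False by (simp add: ennreal_enn2real_if less_top)
  finally show ?thesis .
qed

theorem mainTheorem16:
  fixes P :: "('a \<times> 'b) measure" and MU :: "'a measure" and MV :: "'b measure"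
    and M L :: nat and \<tau> :: real and F :: "('a \<times> 'b) set"
  assumes "prob_space P"
    and "sets P = sets (MU \<Otimes>\<^sub>M MV)"
    and "absolutely_continuous (marg1 P MU \<Otimes>\<^sub>M marg2 P MV) P"
    and "M > 0" and "L > 0" and "\<tau> > 0"
    and "F \<in> sets (MU \<Otimes>\<^sub>M MV)"
  shows "measure (PiM {..<M} (\<lambda>_. marg1 P MU) \<Otimes>\<^sub>M PiM {..<L} (\<lambda>_. marg2 P MV))
           {(u, v) \<in> space (PiM {..<M} (\<lambda>_. marg1 P MU) \<Otimes>\<^sub>M PiM {..<L} (\<lambda>_. marg2 P MV)).
              \<forall>m<M. \<forall>l<L. (u m, v l) \<notin> F}
         \<le> measure P (space P - F)
           + measure P {z \<in> space P. info_density P MU MV z \<ge> ln (real M * real L) - \<tau>}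
           + exp \<tau> / real (max M L)
           + exp (- (1/2) * exp \<tau>)"
proof -
  interpret P: prob_space P by fact
  define PU where "PU = marg1 P MU"
  define PV where "PV = marg2 P MV"
  have fstm: "fst \<in> measurable P MU"
    unfolding measurable_cong_sets[OF assms(2) refl] by (rule measurable_fst)
  have sndm: "snd \<in> measurable P MV"
    unfolding measurable_cong_sets[OF assms(2) refl] by (rule measurable_snd)
  have spP: "space P = space MU \<times> space MV"
    using sets_eq_imp_space_eq[OF assms(2)] by (simp add: space_pair_measure)
  have PUp: "prob_space PU" unfolding PU_def marg1_def by (rule P.prob_space_distr[OF fstm])
  have PVp: "prob_space PV" unfolding PV_def marg2_def by (rule P.prob_space_distr[OF sndm])
  interpret PU: prob_space PU by fact
  interpret PV: prob_space PV by fact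
  have setsPU: "sets PU = sets MU" by (simp add: PU_def marg1_def)
  have setsPV: "sets PV = sets MV" by (simp add: PV_def marg2_def)
  have spPU: "space PU = space MU" by (simp add: PU_def marg1_def)
  have spPV: "space PV = space MV" by (simp add: PV_def marg2_def)
  define Q where "Q = PU \<Otimes>\<^sub>M PV"
  interpret PUV: pair_sigma_finite PU PV ..
  interpret Qp: prob_space Q unfolding Q_def by (rule prob_space_pair) (unfold_locales)
  have setsQ: "sets Q = sets (MU \<Otimes>\<^sub>M MV)" unfolding Q_def by (rule sets_pair_measure_cong[OF setsPU setsPV])
  have setsPQ: "sets P = sets Q" using assms(2) setsQ by simp
  have spQ: "space Q = space P" using sets_eq_imp_space_eq[OF setsPQ] by simp
  have ac: "absolutely_continuous Q P" using assms(3) unfolding Q_def PU_def PV_def .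
  define f where "f = RN_deriv Q P"
  have dens: "density Q f = P" unfolding f_def by (rule Qp.density_RN_deriv[OF ac setsPQ])
  have fm[measurable]: "f \<in> borel_measurable Q" unfolding f_def by (rule borel_measurable_RN_deriv)
  have fm': "f \<in> borel_measurable (PU \<Otimes>\<^sub>M PV)" using fm unfolding Q_def .
  have ffin: "AE z in Q. f z \<noteq> \<infinity>"
    unfolding f_def by (rule Qp.RN_deriv_finite[OF _ ac setsPQ]) unfold_locales
  have Fq[measurable]: "F \<in> sets Q" using assms(7) setsQ by simp
  define c where "c = exp \<tau> / (real M * real L)"
  have cpos: "c > 0" using assms(4,5) by (simp add: c_def)
  define A where "A = {z \<in> space Q. z \<in> F \<and> 0 < enn2real (f z) \<and> ln (enn2real (f z)) < ln (real M * real L) - \<tau>}"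
  have Aset[measurable]: "A \<in> sets Q" unfolding A_def by measurable
  define w where "w z = c * enn2real (f z) * indicator A z" for z
  have wm[measurable]: "w \<in> borel_measurable Q" unfolding w_def by measurable
  have w01: "0 \<le> w z \<and> w z \<le> 1" for z
  proof (cases "z \<in> A")
    case True
    then have y0: "0 < enn2real (f z)" and yl: "ln (enn2real (f z)) < ln (real M * real L) - \<tau>"
      unfolding A_def by auto
    have "enn2real (f z) = exp (ln (enn2real (f z)))" using y0 by simp
    also have "\<dots> < exp (ln (real M * real L) - \<tau>)" using yl by simp
    also have "\<dots> = real M * real L / exp \<tau>" using assms(4,5) by (simp add: exp_diff)
    finally have "c * enn2real (f z) < c * (real M * real L / exp \<tau>)" using cpos by (intro mult_strict_left_mono)
    also have "\<dots> = 1" using assms(4,5) by (simp add: c_def)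
    finally show ?thesis using True cpos y0 unfolding w_def by simp
  next
    case False then show ?thesis unfolding w_def by simp
  qed
  have wA: "w z = 0" if "z \<notin> A" for z using that unfolding w_def by simp
  have wle: "ennreal (w z) \<le> ennreal c * f z" for z unfolding w_def by (rule wle_lemma[OF cpos])
  have margU: "AE x in PU. (\<integral>\<^sup>+ y. f (x, y) \<partial>PV) = 1"
  proof (rule ae_le1[OF PUp])
    show "(\<lambda>x. \<integral>\<^sup>+ y. f (x, y) \<partial>PV) \<in> borel_measurable PU"
      by (rule PV.borel_measurable_nn_integral_fst[OF fm'])
    fix S assume S: "S \<in> sets PU"
    have S': "S \<in> sets MU" using S setsPU by simp
    have SV: "S \<times> space PV \<in> sets Q" unfolding Q_def using S by (intro pair_measureI) auto
    have "(\<integral>\<^sup>+ x. (\<integral>\<^sup>+ y. f (x, y) \<partial>PV) * indicator S x \<partial>PU)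
        = (\<integral>\<^sup>+ x. (\<integral>\<^sup>+ y. f (x, y) * indicator (S \<times> space PV) (x, y) \<partial>PV) \<partial>PU)"
    proof (intro nn_integral_cong)
      fix x assume x: "x \<in> space PU"
      have "(\<integral>\<^sup>+ y. f (x, y) * indicator (S \<times> space PV) (x, y) \<partial>PV) = (\<integral>\<^sup>+ y. f (x, y) * indicator S x \<partial>PV)"
        by (intro nn_integral_cong) (auto simp: indicator_def)
      also have "\<dots> = (\<integral>\<^sup>+ y. f (x, y) \<partial>PV) * indicator S x"
        using x by (intro nn_integral_multc) (use fm' in simp)
      finally show "(\<integral>\<^sup>+ y. f (x, y) \<partial>PV) * indicator S x = (\<integral>\<^sup>+ y. f (x, y) * indicator (S \<times> space PV) (x, y) \<partial>PV)" by simp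
    qed
    also have "\<dots> = (\<integral>\<^sup>+ z. f z * indicator (S \<times> space PV) z \<partial>Q)"
    proof -
      have im: "(\<lambda>z. f z * indicator (S \<times> space PV) z) \<in> borel_measurable (PU \<Otimes>\<^sub>M PV)"
        using SV unfolding Q_def by (intro borel_measurable_times_ennreal borel_measurable_indicator fm')
      show ?thesis using PV.nn_integral_fst[OF im] unfolding Q_def by simp
    qed
    also have "\<dots> = emeasure (density Q f) (S \<times> space PV)" using SV by (simp add: emeasure_density)
    also have "\<dots> = emeasure P (S \<times> space MV)" using dens spPV by simp
    also have "\<dots> = emeasure PU S"
    proof -
      have "fst -` S \<inter> space P = S \<times> space MV" using spP sets.sets_into_space[OF S'] by auto
      then show ?thesis unfolding PU_def marg1_def using emeasure_distr[OF fstm S'] by simp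
    qed
    finally show "(\<integral>\<^sup>+ x. (\<integral>\<^sup>+ y. f (x, y) \<partial>PV) * indicator S x \<partial>PU) = emeasure PU S" .
  qed
  have aeX: "AE x in PU. (\<integral>y. w (x, y) \<partial>PV) \<le> c"
    using margU AE_space
  proof (eventually_elim)
    case (elim x)
    show ?case
      by (rule int_le_c[OF PVp _ elim(1)]) (use elim(2) fm' w01 wle cpos in \<open>auto intro: measurable_compose_Pair1 simp: Q_def[symmetric]\<close>)
  qed
  have margV: "AE y in PV. (\<integral>\<^sup>+ x. f (x, y) \<partial>PU) = 1"
  proof (rule ae_le1[OF PVp])
    have "(\<lambda>(y, x). f (x, y)) \<in> borel_measurable (PV \<Otimes>\<^sub>M PU)"
      using measurable_compose[OF measurable_pair_swap' fm'] by (simp add: case_prod_beta')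
    then show "(\<lambda>y. \<integral>\<^sup>+ x. f (x, y) \<partial>PU) \<in> borel_measurable PV"
      by (intro PU.borel_measurable_nn_integral) simp
    fix S assume S: "S \<in> sets PV"
    have S': "S \<in> sets MV" using S setsPV by simp
    have SV: "space PU \<times> S \<in> sets Q" unfolding Q_def using S by (intro pair_measureI) auto
    have "(\<integral>\<^sup>+ y. (\<integral>\<^sup>+ x. f (x, y) \<partial>PU) * indicator S y \<partial>PV)
        = (\<integral>\<^sup>+ y. (\<integral>\<^sup>+ x. f (x, y) * indicator (space PU \<times> S) (x, y) \<partial>PU) \<partial>PV)"
    proof (intro nn_integral_cong)
      fix y assume y: "y \<in> space PV"
      have "(\<integral>\<^sup>+ x. f (x, y) * indicator (space PU \<times> S) (x, y) \<partial>PU) = (\<integral>\<^sup>+ x. f (x, y) * indicator S y \<partial>PU)"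
        by (intro nn_integral_cong) (auto simp: indicator_def)
      also have "\<dots> = (\<integral>\<^sup>+ x. f (x, y) \<partial>PU) * indicator S y"
        using y by (intro nn_integral_multc) (use fm' in simp)
      finally show "(\<integral>\<^sup>+ x. f (x, y) \<partial>PU) * indicator S y = (\<integral>\<^sup>+ x. f (x, y) * indicator (space PU \<times> S) (x, y) \<partial>PU)" by simp
    qed
    also have "\<dots> = (\<integral>\<^sup>+ z. f z * indicator (space PU \<times> S) z \<partial>Q)"
    proof -
      have im: "(\<lambda>z. f z * indicator (space PU \<times> S) z) \<in> borel_measurable (PU \<Otimes>\<^sub>M PV)"
        using SV unfolding Q_def by (intro borel_measurable_times_ennreal borel_measurable_indicator fm')
      show ?thesis using PUV.nn_integral_snd[OF im] unfolding Q_def by simp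
    qed
    also have "\<dots> = emeasure (density Q f) (space PU \<times> S)" using SV by (simp add: emeasure_density)
    also have "\<dots> = emeasure P (space MU \<times> S)" using dens spPU by simp
    also have "\<dots> = emeasure PV S"
    proof -
      have "snd -` S \<inter> space P = space MU \<times> S" using spP sets.sets_into_space[OF S'] by auto
      then show ?thesis unfolding PV_def marg2_def using emeasure_distr[OF sndm S'] by simp
    qed
    finally show "(\<integral>\<^sup>+ y. (\<integral>\<^sup>+ x. f (x, y) \<partial>PU) * indicator S y \<partial>PV) = emeasure PV S" .
  qed
  have aeY: "AE y in PV. (\<integral>x. w (x, y) \<partial>PU) \<le> c"
    using margV AE_space
  proof (eventually_elim)
    case (elim y)
    have "(\<lambda>x. w (x, y)) \<in> borel_measurable PU"
      using measurable_compose[OF measurable_Pair2'[OF elim(2)] wm[unfolded Q_def]] .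
    moreover have "(\<lambda>x. f (x, y)) \<in> borel_measurable PU"
      using measurable_compose[OF measurable_Pair2'[OF elim(2)] fm'] .
    ultimately show ?case
      by (intro int_le_c[OF PUp _ elim(1)]) (use w01 wle cpos in auto)
  qed
  define \<alpha> where "\<alpha> = measure P A"
  have AP: "A \<in> sets P" using Aset setsPQ by simp
  have int: "(\<integral>z. w z \<partial>Q) = c * \<alpha>"
  proof -
    have wi: "integrable Q w" using w01 by (intro Qp.integrable_const_bound[where B=1] AE_I2) auto
    have "ennreal (\<integral>z. w z \<partial>Q) = (\<integral>\<^sup>+ z. ennreal (w z) \<partial>Q)"
      using wi w01 by (intro nn_integral_eq_integral[symmetric]) auto
    also have "\<dots> = (\<integral>\<^sup>+ z. ennreal c * (f z * indicator A z) \<partial>Q)"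
      using ffin
    proof (intro nn_integral_cong_AE, eventually_elim)
      case (elim z)
      show ?case
      proof (cases "z \<in> A")
        case True
        have "ennreal (c * enn2real (f z)) = ennreal c * ennreal (enn2real (f z))"
          using cpos by (simp add: ennreal_mult)
        also have "\<dots> = ennreal c * f z" using elim by (simp add: ennreal_enn2real_if less_top)
        finally show ?thesis using True unfolding w_def by simp
      next
        case False then show ?thesis unfolding w_def by simp
      qed
    qed
    also have "\<dots> = ennreal c * emeasure P A"
      using Aset by (simp add: nn_integral_cmult emeasure_density dens[symmetric])
    also have "\<dots> = ennreal (c * \<alpha>)" using cpos by (simp add: \<alpha>_def P.emeasure_eq_measure ennreal_mult)
    finally have eq: "ennreal (\<integral>z. w z \<partial>Q) = ennreal (c * \<alpha>)" .
    have "0 \<le> (\<integral>z. w z \<partial>Q)" using w01 by (intro integral_nonneg_AE AE_I2) auto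
    moreover have "0 \<le> c * \<alpha>" using cpos by (simp add: \<alpha>_def)
    ultimately show ?thesis using eq by simp
  qed
  have Aset': "A \<in> sets (PU \<Otimes>\<^sub>M PV)" using Aset unfolding Q_def .
  have wm': "w \<in> borel_measurable (PU \<Otimes>\<^sub>M PV)" using wm unfolding Q_def .
  let ?PX = "PiM {..<M} (\<lambda>_. PU)" and ?PY = "PiM {..<L} (\<lambda>_. PV)"
  let ?EA = "{(u, v) \<in> space (?PX \<Otimes>\<^sub>M ?PY). \<forall>m<M. \<forall>l<L. (u m, v l) \<notin> A}"
  have core1: "measure (?PX \<Otimes>\<^sub>M ?PY) ?EA \<le> 1 - \<alpha> + exp \<tau> / real M + exp (- (1/2) * exp \<tau>)"
    by (rule core[OF PUp PVp Aset' wm' w01 wA aeX aeY c_def assms(4) assms(5) int[unfolded Q_def]])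
  define A2 where "A2 = (\<lambda>(y, x). (x, y)) -` A \<inter> space (PV \<Otimes>\<^sub>M PU)"
  define w2 where "w2 = (\<lambda>(y, x). w (x, y))"
  have A2set: "A2 \<in> sets (PV \<Otimes>\<^sub>M PU)" unfolding A2_def by (rule measurable_sets[OF measurable_pair_swap' Aset'])
  have w2m: "w2 \<in> borel_measurable (PV \<Otimes>\<^sub>M PU)" unfolding w2_def
    using measurable_compose[OF measurable_pair_swap' wm'] by (simp add: case_prod_beta')
  have w2_01: "0 \<le> w2 z \<and> w2 z \<le> 1" for z unfolding w2_def using w01 by (simp add: case_prod_beta')
  have w2A: "w2 z = 0" if "z \<notin> A2" for z
  proof -
    obtain y x where z: "z = (y, x)" by (cases z)
    have "(x, y) \<notin> A"
    proof
      assume xy: "(x, y) \<in> A"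
      then have "(x, y) \<in> space Q" unfolding A_def by auto
      then have "z \<in> space (PV \<Otimes>\<^sub>M PU)" unfolding Q_def z by (auto simp: space_pair_measure)
      then show False using that xy unfolding A2_def z by auto
    qed
    then show ?thesis unfolding w2_def z using wA by simp
  qed
  have aeX2: "AE y in PV. (\<integral>x. w2 (y, x) \<partial>PU) \<le> c" using aeY unfolding w2_def by simp
  have aeY2: "AE x in PU. (\<integral>y. w2 (y, x) \<partial>PV) \<le> c" using aeX unfolding w2_def by simp
  have c2: "c = exp \<tau> / (real L * real M)" unfolding c_def by (simp add: mult.commute)
  have int2: "(\<integral>z. w2 z \<partial>(PV \<Otimes>\<^sub>M PU)) = c * \<alpha>"
    using PUV.integral_product_swap[OF wm'] int unfolding Q_def w2_def by simp
  have core2: "measure (?PY \<Otimes>\<^sub>M ?PX) {(v, u) \<in> space (?PY \<Otimes>\<^sub>M ?PX). \<forall>l<L. \<forall>m<M. (v l, u m) \<notin> A2}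
      \<le> 1 - \<alpha> + exp \<tau> / real L + exp (- (1/2) * exp \<tau>)"
    by (rule core[OF PVp PUp A2set w2m w2_01 w2A aeX2 aeY2 c2 assms(5) assms(4) int2])
  have sw: "measure (?PX \<Otimes>\<^sub>M ?PY) ?EA = measure (?PY \<Otimes>\<^sub>M ?PX) {(v, u) \<in> space (?PY \<Otimes>\<^sub>M ?PX). \<forall>l<L. \<forall>m<M. (v l, u m) \<notin> A2}"
    unfolding A2_def by (rule swap_measure[OF PUp PVp Aset'])
  have coremin: "measure (?PX \<Otimes>\<^sub>M ?PY) ?EA \<le> 1 - \<alpha> + exp \<tau> / real (max M L) + exp (- (1/2) * exp \<tau>)"
  proof (cases "M \<le> L")
    case True then have "max M L = L" by simp
    then show ?thesis using core2 sw by simp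
  next
    case False then have "max M L = M" by simp
    then show ?thesis using core1 by simp
  qed
  have lhsA: "measure (?PX \<Otimes>\<^sub>M ?PY) {(u, v) \<in> space (?PX \<Otimes>\<^sub>M ?PY). \<forall>m<M. \<forall>l<L. (u m, v l) \<notin> F}
      \<le> measure (?PX \<Otimes>\<^sub>M ?PY) ?EA"
  proof -
    interpret PXp: prob_space ?PX by (rule prob_space_PiM) (rule PUp)
    interpret PYp: prob_space ?PY by (rule prob_space_PiM) (rule PVp)
    interpret PPp: prob_space "?PX \<Otimes>\<^sub>M ?PY" by (rule prob_space_pair) (unfold_locales)
    have "A \<subseteq> F" unfolding A_def by auto
    then show ?thesis using Eset_lemma[OF Aset', of M L]
      by (intro PPp.finite_measure_mono) auto
  qed
  define Iset where "Iset = {z \<in> space P. info_density P MU MV z \<ge> ln (real M * real L) - \<tau>}"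
  have idf: "info_density P MU MV z = ln (enn2real (f z))" for z
    unfolding info_density_def f_def Q_def PU_def PV_def ..
  have Isets: "Iset \<in> sets P" unfolding Iset_def idf using setsPQ spQ
    by (simp add: setsPQ) (measurable, simp add: spQ[symmetric])
  define N0 where "N0 = {z \<in> space P. \<not> (0 < enn2real (f z))}"
  have N0null: "N0 \<in> null_sets P"
  proof -
    have "N0 = {z \<in> space Q. f z = 0} \<union> {z \<in> space Q. f z = \<top>}"
      unfolding N0_def spQ[symmetric] by (auto simp: enn2real_positive_iff less_top)
    moreover have "{z \<in> space Q. f z = \<top>} \<in> null_sets P"
    proof -
      have sT: "{z \<in> space Q. f z = \<top>} \<in> sets Q" by measurable
      have "(AE z in Q. f z \<noteq> \<top>) = ({z \<in> space Q. \<not> f z \<noteq> \<top>} \<in> null_sets Q)"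
        by (rule AE_iff_null) (use sT in simp)
      then have "{z \<in> space Q. f z = \<top>} \<in> null_sets Q" using ffin by simp
      then show ?thesis using ac unfolding absolutely_continuous_def by auto
    qed
    moreover have "{z \<in> space Q. f z = 0} \<in> null_sets P"
    proof -
      have s0: "{z \<in> space Q. f z = 0} \<in> sets Q" by measurable
      have "emeasure (density Q f) {z \<in> space Q. f z = 0} = (\<integral>\<^sup>+ z. f z * indicator {z \<in> space Q. f z = 0} z \<partial>Q)"
        using s0 by (simp add: emeasure_density)
      also have "\<dots> = (\<integral>\<^sup>+ z. 0 \<partial>Q)" by (intro nn_integral_cong) (auto simp: indicator_def)
      finally have "emeasure P {z \<in> space Q. f z = 0} = 0" using dens by simp
      then show ?thesis using s0 setsPQ by (auto simp: null_sets_def)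
    qed
    ultimately show ?thesis by auto
  qed
  have oneminus: "1 - \<alpha> \<le> measure P (space P - F) + measure P Iset"
  proof -
    have s1: "space P - F \<in> sets P" using assms(7) assms(2) by auto
    have s2: "N0 \<in> sets P" using N0null by (rule null_setsD2)
    have s12: "(space P - F) \<union> Iset \<in> sets P" using s1 Isets by (rule sets.Un)
    have e1: "1 - \<alpha> = measure P (space P - A)" unfolding \<alpha>_def using AP by (simp add: P.prob_compl)
    have e2: "measure P (space P - A) \<le> measure P ((space P - F) \<union> Iset \<union> N0)"
    proof (rule P.finite_measure_mono)
      show "space P - A \<subseteq> (space P - F) \<union> Iset \<union> N0"
        unfolding A_def Iset_def N0_def idf spQ by auto
      show "(space P - F) \<union> Iset \<union> N0 \<in> sets P" using s12 s2 by (rule sets.Un)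
    qed
    have e3: "measure P ((space P - F) \<union> Iset \<union> N0) \<le> measure P ((space P - F) \<union> Iset) + measure P N0"
      by (rule measure_subadditive[OF s12 s2]) (simp_all add: P.emeasure_eq_measure)
    have e4: "measure P ((space P - F) \<union> Iset) \<le> measure P (space P - F) + measure P Iset"
      by (rule measure_subadditive[OF s1 Isets]) (simp_all add: P.emeasure_eq_measure)
    have e5: "measure P N0 = 0" using N0null by (simp add: measure_def null_sets_def)
    show ?thesis using e1 e2 e3 e4 e5 by linarith
  qed
  show ?thesis
    using lhsA coremin oneminus unfolding PU_def[symmetric] PV_def[symmetric] Iset_def[symmetric] by linarith
qed


end
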